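(* Let $\tau > 0$ and $\lambda > 0$ be constants. Then the function $$c(x,y,d) \triangleq \log\left(1 + \left[\left(\frac{1}{1+x}\right)\left(\frac{1}{y}\right) + \tau\right]\frac{1}{d^{\lambda}}\right)$$ is convex on the set $\{(x,y,d) \in \mathbb{R}^3 : x > -1,\ y > 0,\ d > 0\}$.
   Context: $\log$ denotes the natural logarithm. *)

theory Defs
  imports "HOL-Analysis.Analysis"
begin

definition cfun :: "real \<Rightarrow> real \<Rightarrow> real \<times> real \<times> real \<Rightarrow> real" where
  "cfun tau lam p = (case p of (x, y, d) \<Rightarrow>
     ln (1 + ((1 / (1 + x)) * (1 / y) + tau) * (1 / d powr lam)))"

definition cdomain :: "(real \<times> real \<times> real) set" where
  "cdomain = {(x, y, d). x > -1 \<and> y > 0 \<and> d > 0}"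

end

theory Submission
  imports Defs
begin

lemma amgm_inv:
  fixes u1 u2 s t :: real
  assumes "u1 > 0" "u2 > 0" "s \<ge> 0" "t \<ge> 0" "s + t = 1"
  shows "1 / (s * u1 + t * u2) \<le> (1 / u1) powr s * (1 / u2) powr t"
proof -
  have y: "u1 powr s * u2 powr t \<le> s * u1 + t * u2"
    using Youngs_inequality_0[of s t u1 u2] assms by simp
  have pos: "u1 powr s * u2 powr t > 0" using assms by simp
  have "1 / (s * u1 + t * u2) \<le> 1 / (u1 powr s * u2 powr t)"
    using y pos by (simp add: frac_le)
  also have "\<dots> = (1 / u1) powr s * (1 / u2) powr t"
    using assms by (simp add: powr_divide)
  finally show ?thesis .
qed

lemma amgm_invpow:
  fixes u1 u2 s t lam :: real
  assumes "u1 > 0" "u2 > 0" "s \<ge> 0" "t \<ge> 0" "s + t = 1" "lam > 0"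
  shows "1 / (s * u1 + t * u2) powr lam \<le> (1 / u1 powr lam) powr s * (1 / u2 powr lam) powr t"
proof -
  have y: "u1 powr s * u2 powr t \<le> s * u1 + t * u2"
    using Youngs_inequality_0[of s t u1 u2] assms by simp
  have pos: "u1 powr s * u2 powr t > 0" using assms by simp
  have y2: "(u1 powr s * u2 powr t) powr lam \<le> (s * u1 + t * u2) powr lam"
    using y pos assms by (intro powr_mono2) auto
  have pos2: "(u1 powr s * u2 powr t) powr lam > 0" using pos assms by simp
  have "1 / (s * u1 + t * u2) powr lam \<le> 1 / (u1 powr s * u2 powr t) powr lam"
    using y2 pos2 by (simp add: frac_le)
  also have "\<dots> = (1 / u1 powr lam) powr s * (1 / u2 powr lam) powr t"
    using assms by (simp add: powr_divide powr_mult powr_powr mult.commute)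
  finally show ?thesis .
qed

lemma holder3:
  fixes a1 a2 b1 b2 s t A B :: real
  assumes "a1 > 0" "a2 > 0" "b1 > 0" "b2 > 0" "s \<ge> 0" "t \<ge> 0" "s + t = 1"
    and "A \<le> a1 powr s * a2 powr t" "B \<le> b1 powr s * b2 powr t" "A \<ge> 0" "B \<ge> 0"
  shows "ln (1 + A + B) \<le> s * ln (1 + a1 + b1) + t * ln (1 + a2 + b2)"
proof -
  define P where "P = 1 + a1 + b1"
  define Q where "Q = 1 + a2 + b2"
  have P: "P > 0" and Q: "Q > 0" using assms by (auto simp: P_def Q_def)
  have h1: "(1/P) powr s * (1/Q) powr t \<le> s * (1/P) + t * (1/Q)"
    using Youngs_inequality_0[of s t "1/P" "1/Q"] assms P Q by simp
  have h2: "(a1/P) powr s * (a2/Q) powr t \<le> s * (a1/P) + t * (a2/Q)"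
    using Youngs_inequality_0[of s t "a1/P" "a2/Q"] assms P Q by simp
  have h3: "(b1/P) powr s * (b2/Q) powr t \<le> s * (b1/P) + t * (b2/Q)"
    using Youngs_inequality_0[of s t "b1/P" "b2/Q"] assms P Q by simp
  define G where "G = P powr s * Q powr t"
  have G: "G > 0" using P Q by (simp add: G_def)
  have e1: "(1/P) powr s * (1/Q) powr t = 1 / G"
    using P Q by (simp add: G_def powr_divide)
  have e2: "(a1/P) powr s * (a2/Q) powr t = a1 powr s * a2 powr t / G"
    using P Q assms by (simp add: G_def powr_divide)
  have e3: "(b1/P) powr s * (b2/Q) powr t = b1 powr s * b2 powr t / G"
    using P Q assms by (simp add: G_def powr_divide)
  have sum: "s * (1/P) + t * (1/Q) + (s * (a1/P) + t * (a2/Q)) + (s * (b1/P) + t * (b2/Q)) = 1"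
  proof -
    have "s * (1/P) + t * (1/Q) + (s * (a1/P) + t * (a2/Q)) + (s * (b1/P) + t * (b2/Q))
        = s * ((1 + a1 + b1) / P) + t * ((1 + a2 + b2) / Q)"
      by (simp add: add_divide_distrib algebra_simps)
    also have "\<dots> = s + t" using P Q by (simp add: P_def Q_def)
    finally show ?thesis using assms by simp
  qed
  have "(1 + a1 powr s * a2 powr t + b1 powr s * b2 powr t) / G \<le> 1"
    using h1 h2 h3 e1 e2 e3 sum by (simp add: add_divide_distrib)
  hence "1 + a1 powr s * a2 powr t + b1 powr s * b2 powr t \<le> G"
    using G by simp
  hence le: "1 + A + B \<le> G" using assms by linarith
  have "ln (1 + A + B) \<le> ln G" using le assms G by simp
  also have "ln G = s * ln P + t * ln Q"
    using P Q by (simp add: G_def ln_mult ln_powr)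
  finally show ?thesis by (simp add: P_def Q_def)
qed

theorem proposition1:
  fixes tau lam :: real
  assumes "tau > 0" and "lam > 0"
  shows "convex_on cdomain (cfun tau lam)"
proof (rule convex_onI)
  show "convex cdomain"
    unfolding convex_def cdomain_def
  proof (clarsimp)
    fix x1 y1 d1 x2 y2 d2 u v :: real
    assume h: "-1 < x1" "0 < y1" "0 < d1" "-1 < x2" "0 < y2" "0 < d2" "0 \<le> u" "0 \<le> v" "u + v = 1"
    have "u * (1 + x1) + v * (1 + x2) > 0"
      using h by (smt (verit) mult_pos_pos mult_nonneg_nonneg)
    moreover have "u * y1 + v * y2 > 0" using h by (smt (verit) mult_pos_pos mult_nonneg_nonneg)
    moreover have "u * d1 + v * d2 > 0" using h by (smt (verit) mult_pos_pos mult_nonneg_nonneg)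
    ultimately show "- 1 < u * x1 + v * x2 \<and> 0 < u * y1 + v * y2 \<and> 0 < u * d1 + v * d2"
      using h by (simp add: algebra_simps)
  qed
next
  fix t :: real and p q :: "real \<times> real \<times> real"
  assume t: "0 < t" "t < 1" and p: "p \<in> cdomain" and q: "q \<in> cdomain"
  obtain x1 y1 d1 where pe: "p = (x1, y1, d1)" by (cases p) auto
  obtain x2 y2 d2 where qe: "q = (x2, y2, d2)" by (cases q) auto
  define s where "s = 1 - t"
  have st: "s \<ge> 0" "t \<ge> 0" "s + t = 1" using t by (auto simp: s_def)
  have h: "1 + x1 > 0" "y1 > 0" "d1 > 0" "1 + x2 > 0" "y2 > 0" "d2 > 0"
    using p q by (auto simp: cdomain_def pe qe)
  have xm: "1 + (s * x1 + t * x2) = s * (1 + x1) + t * (1 + x2)" using st by (simp add: algebra_simps)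
  have pos3: "s * (1 + x1) + t * (1 + x2) > 0" "s * y1 + t * y2 > 0" "s * d1 + t * d2 > 0"
    using h st by (smt (verit) mult_pos_pos mult_nonneg_nonneg)+
  define X1 where "X1 = 1 / (1 + x1)"
  define X2 where "X2 = 1 / (1 + x2)"
  define Y1 where "Y1 = 1 / y1"
  define Y2 where "Y2 = 1 / y2"
  define D1 where "D1 = 1 / d1 powr lam"
  define D2 where "D2 = 1 / d2 powr lam"
  define Xm where "Xm = 1 / (s * (1 + x1) + t * (1 + x2))"
  define Ym where "Ym = 1 / (s * y1 + t * y2)"
  define Dm where "Dm = 1 / (s * d1 + t * d2) powr lam"
  have pos: "X1 > 0" "X2 > 0" "Y1 > 0" "Y2 > 0" "D1 > 0" "D2 > 0" "Xm > 0" "Ym > 0" "Dm > 0"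
    using h pos3 by (auto simp: X1_def X2_def Y1_def Y2_def D1_def D2_def Xm_def Ym_def Dm_def)
  have ix: "Xm \<le> X1 powr s * X2 powr t"
    unfolding Xm_def X1_def X2_def using amgm_inv[of "1+x1" "1+x2" s t] h st by simp
  have iy: "Ym \<le> Y1 powr s * Y2 powr t"
    unfolding Ym_def Y1_def Y2_def using amgm_inv[of y1 y2 s t] h st by simp
  have id: "Dm \<le> D1 powr s * D2 powr t"
    unfolding Dm_def D1_def D2_def using amgm_invpow[of d1 d2 s t lam] h st assms by simp
  have iA: "Xm * Ym * Dm \<le> (X1 * Y1 * D1) powr s * (X2 * Y2 * D2) powr t"
  proof -
    have "Xm * Ym * Dm \<le> (X1 powr s * X2 powr t) * (Y1 powr s * Y2 powr t) * (D1 powr s * D2 powr t)"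
      using ix iy id pos by (intro mult_mono) (auto intro: mult_nonneg_nonneg)
    also have "\<dots> = (X1 * Y1 * D1) powr s * (X2 * Y2 * D2) powr t"
      using pos by (simp add: powr_mult)
    finally show ?thesis .
  qed
  have iB: "tau * Dm \<le> (tau * D1) powr s * (tau * D2) powr t"
  proof -
    have "tau * Dm \<le> tau * (D1 powr s * D2 powr t)"
      using id assms by simp
    also have "\<dots> = (tau * D1) powr s * (tau * D2) powr t"
      using pos assms st by (simp add: powr_mult powr_add[symmetric])
    finally show ?thesis .
  qed
  have key: "ln (1 + Xm * Ym * Dm + tau * Dm) \<le> s * ln (1 + X1 * Y1 * D1 + tau * D1) + t * ln (1 + X2 * Y2 * D2 + tau * D2)"
    using holder3[OF _ _ _ _ st iA iB] pos assms by simp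
  have "cfun tau lam ((1 - t) *\<^sub>R p + t *\<^sub>R q) = ln (1 + Xm * Ym * Dm + tau * Dm)"
    unfolding cfun_def pe qe Xm_def Ym_def Dm_def using xm by (simp add: s_def algebra_simps)
  moreover have "cfun tau lam p = ln (1 + X1 * Y1 * D1 + tau * D1)"
    unfolding cfun_def pe X1_def Y1_def D1_def by (simp add: algebra_simps)
  moreover have "cfun tau lam q = ln (1 + X2 * Y2 * D2 + tau * D2)"
    unfolding cfun_def qe X2_def Y2_def D2_def by (simp add: algebra_simps)
  ultimately show "cfun tau lam ((1 - t) *\<^sub>R p + t *\<^sub>R q) \<le> (1 - t) * cfun tau lam p + t * cfun tau lam q"
    using key by (simp add: s_def)
qed

end
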